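(* Let $n\in\mathbb N$, and let $P(z)=\sum_{j\ge0}p_jz^j$ with $p_j\ge0$ for all $j\ge0$, $P(1)=1$ and $P'(1)\in(0,1)$. Let $r>1$ be such that $r>P(r)$ (in particular $P(r)<\infty$). Let $\xi_j=\exp(2\pi\mathbf i j/n)$, $j=1,\dots,n$, and let $C_{P,r}^{(n)}=(c_{hj})_{h,j=1}^n$ be the $n\times n$ matrix with $c_{hj}=(r\xi_h-P(r\xi_j))^{-1}$. Then for all $k=1,\dots,n-1$, $$\sigma_{k+1}\big(C_{P,r}^{(n)}\big)\le\frac{\theta^k\,n}{(1-\theta)(r-p_0)},\qquad\text{where }\theta:=\frac{P(r)-p_0}{r-p_0}\in(0,1),$$ and $\sigma_1\ge\sigma_2\ge\dots$ denote the singular values. *)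

theory Defs
  imports "HOL-Computational_Algebra.Polynomial" "Jordan_Normal_Form.Schur_Decomposition"
    "Jordan_Normal_Form.Char_Poly" Complex_Main
begin

definition pser :: "(nat \<Rightarrow> real) \<Rightarrow> complex \<Rightarrow> complex" where
  "pser p z = (\<Sum>j. complex_of_real (p j) * z ^ j)"

definition singular_values :: "complex mat \<Rightarrow> real list" where
  "singular_values A =
     rev (sorted_list_of_multiset
       (image_mset (\<lambda>z. sqrt (Re z)) (proots (char_poly (mat_adjoint A * A)))))"

definition sigma :: "complex mat \<Rightarrow> nat \<Rightarrow> real" where
  "sigma A k = singular_values A ! (k - 1)"

definition xi :: "nat \<Rightarrow> nat \<Rightarrow> complex" where
  "xi n j = exp (2 * complex_of_real pi * \<i> * of_nat j / of_nat n)"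

text \<open>The matrix C_{P,r}^{(n)}; row/column index h,j in {1..n} is stored at h-1, j-1.\<close>
definition CPr :: "(nat \<Rightarrow> real) \<Rightarrow> real \<Rightarrow> nat \<Rightarrow> complex mat" where
  "CPr p r n = mat n n (\<lambda>(h, j).
      inverse (complex_of_real r * xi n (h + 1) - pser p (complex_of_real r * xi n (j + 1))))"

end

theory Submission
  imports Defs
begin

definition ip :: "nat \<Rightarrow> (nat \<Rightarrow> complex) \<Rightarrow> (nat \<Rightarrow> complex) \<Rightarrow> complex" where
  "ip n x y = (\<Sum>i<n. cnj (x i) * y i)"

definition mv :: "nat \<Rightarrow> complex mat \<Rightarrow> (nat \<Rightarrow> complex) \<Rightarrow> (nat \<Rightarrow> complex)" where
  "mv n A x = (\<lambda>i. \<Sum>l<n. A $$ (i,l) * x l)"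

lemma cnj_mult_self: "cnj (z::complex) * z = complex_of_real ((cmod z)^2)"
  by (subst complex_norm_square) (rule mult.commute)

lemma sum_swap_mult: "(\<Sum>l\<in>A. (a l::complex) * (\<Sum>i\<in>B. f l i * b i)) = (\<Sum>i\<in>B. (\<Sum>l\<in>A. a l * f l i) * b i)"
  unfolding sum_distrib_left sum_distrib_right by (subst sum.swap) (simp add: mult.assoc)

lemma ip_self: "ip n x x = of_real (\<Sum>i<n. (cmod (x i))^2)"
  unfolding ip_def of_real_sum by (rule sum.cong) (simp_all only: cnj_mult_self)

lemma ip_self_zero: assumes "ip n x x = 0" "i < n" shows "x i = 0"
proof -
  have "(\<Sum>i<n. (cmod (x i))^2) = 0" using assms(1) unfolding ip_self by (simp del: of_real_sum)
  hence "\<forall>i\<in>{..<n}. (cmod (x i))^2 = 0" by (subst sum_nonneg_eq_0_iff[symmetric]) auto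
  thus ?thesis using assms(2) by auto
qed

lemma ip_cnj: "ip n y x = cnj (ip n x y)"
  unfolding ip_def by (simp add: mult.commute)

lemma ip_add1: "ip n (\<lambda>h. x h + y h) z = ip n x z + ip n y z"
  unfolding ip_def by (simp add: distrib_right sum.distrib)
lemma ip_diff1: "ip n (\<lambda>h. x h - y h) z = ip n x z - ip n y z"
  unfolding ip_def by (simp add: left_diff_distrib sum_subtractf)
lemma ip_diff2: "ip n z (\<lambda>h. x h - y h) = ip n z x - ip n z y"
  unfolding ip_def by (simp add: right_diff_distrib sum_subtractf)
lemma ip_smult1: "ip n (\<lambda>h. a * x h) z = cnj a * ip n x z"
  unfolding ip_def by (simp add: sum_distrib_left mult.assoc)
lemma ip_smult2: "ip n z (\<lambda>h. a * x h) = a * ip n z x"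
  unfolding ip_def by (simp add: sum_distrib_left mult.assoc mult.left_commute)
lemma ip_sum1: "ip n (\<lambda>h. \<Sum>i\<in>S. f i h) z = (\<Sum>i\<in>S. ip n (f i) z)"
  unfolding ip_def by (simp add: sum_distrib_right sum.swap[of _ S])
lemma ip_sum2: "ip n z (\<lambda>h. \<Sum>i\<in>S. f i h) = (\<Sum>i\<in>S. ip n z (f i))"
  unfolding ip_def by (simp add: sum_distrib_left sum.swap[of _ S])
lemma ip_cong: "(\<And>h. h < n \<Longrightarrow> x h = x' h) \<Longrightarrow> (\<And>h. h < n \<Longrightarrow> y h = y' h) \<Longrightarrow> ip n x y = ip n x' y'"
  unfolding ip_def by (rule sum.cong) auto

locale gs_setup =
  fixes n :: nat and M P Q T :: "complex mat"
  assumes herm: "\<And>i l. i < n \<Longrightarrow> l < n \<Longrightarrow> M $$ (i,l) = cnj (M $$ (l,i))"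
    and MPT: "\<And>i j. i < n \<Longrightarrow> j < n \<Longrightarrow> (\<Sum>l<n. M $$ (i,l) * P $$ (l,j)) = (\<Sum>l<n. P $$ (i,l) * T $$ (l,j))"
    and QP: "\<And>i j. i < n \<Longrightarrow> j < n \<Longrightarrow> (\<Sum>l<n. Q $$ (i,l) * P $$ (l,j)) = (if i = j then 1 else 0)"
    and upper: "\<And>i j. i < n \<Longrightarrow> j < i \<Longrightarrow> T $$ (i,j) = 0"
begin

definition pc :: "nat \<Rightarrow> nat \<Rightarrow> complex" where "pc j = (\<lambda>i. P $$ (i,j))"

fun gsl :: "nat \<Rightarrow> (nat \<Rightarrow> complex) list" where
  "gsl 0 = []"
| "gsl (Suc j) = (let qs = gsl j in qs @ [\<lambda>i. P $$ (i,j) - (\<Sum>l<j. (ip n (qs!l) (pc j) / ip n (qs!l) (qs!l)) * (qs!l) i)])"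

definition q :: "nat \<Rightarrow> nat \<Rightarrow> complex" where "q j = gsl (Suc j) ! j"

lemma len_gsl: "length (gsl j) = j"
  by (induct j) (auto simp: Let_def)

lemma nth_gsl: "l < j \<Longrightarrow> gsl j ! l = q l"
proof (induct j)
  case 0 then show ?case by simp
next
  case (Suc j)
  show ?case
  proof (cases "l = j")
    case True then show ?thesis unfolding q_def by simp
  next
    case False
    then have "l < j" using Suc by simp
    then show ?thesis using Suc len_gsl[of j] by (simp add: Let_def nth_append)
  qed
qed

lemma q_eq: "q j = (\<lambda>i. P $$ (i,j) - (\<Sum>l<j. (ip n (q l) (pc j) / ip n (q l) (q l)) * q l i))"
proof -
  have "q j = (\<lambda>i. P $$ (i,j) - (\<Sum>l<j. (ip n (gsl j!l) (pc j) / ip n (gsl j!l) (gsl j!l)) * (gsl j!l) i))"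
    unfolding q_def using len_gsl[of j] by (simp add: Let_def nth_append)
  also have "\<dots> = (\<lambda>i. P $$ (i,j) - (\<Sum>l<j. (ip n (q l) (pc j) / ip n (q l) (q l)) * q l i))"
    by (intro ext arg_cong2[where f="(-)"] refl sum.cong) (auto simp: nth_gsl)
  finally show ?thesis .
qed

lemma P_inj: assumes "\<And>h. h < n \<Longrightarrow> mv n P b h = 0" "l < n" shows "b l = 0"
proof -
  have "(\<Sum>i<n. (if l = i then 1 else 0) * b i) = (\<Sum>i<n. if l = i then b i else 0)" by (rule sum.cong) auto
  hence "b l = (\<Sum>i<n. (if l = i then 1 else 0) * b i)" using assms(2) by simp
  also have "\<dots> = (\<Sum>i<n. (\<Sum>h<n. Q $$ (l,h) * P $$ (h,i)) * b i)"
    by (rule sum.cong) (simp_all add: QP assms(2))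
  also have "\<dots> = (\<Sum>h<n. Q $$ (l,h) * mv n P b h)"
    unfolding mv_def by (rule sum_swap_mult[symmetric])
  also have "\<dots> = 0" using assms(1) by simp
  finally show ?thesis .
qed


lemma herm_ip: "ip n x (mv n M y) = ip n (mv n M x) y"
proof -
  have "ip n x (mv n M y) = (\<Sum>l<n. (\<Sum>h<n. cnj (x h) * M $$ (h,l)) * y l)"
    unfolding ip_def mv_def by (rule sum_swap_mult)
  also have "\<dots> = (\<Sum>l<n. cnj (\<Sum>h<n. M $$ (l,h) * x h) * y l)"
  proof (rule sum.cong)
    fix l assume l: "l \<in> {..<n}"
    have "(\<Sum>h<n. cnj (x h) * M $$ (h,l)) = (\<Sum>h<n. cnj (M $$ (l,h)) * cnj (x h))"
    proof (rule sum.cong)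
      fix h assume "h \<in> {..<n}"
      then show "cnj (x h) * M $$ (h,l) = cnj (M $$ (l,h)) * cnj (x h)" using herm[of h l] l by simp
    qed simp
    then show "(\<Sum>h<n. cnj (x h) * M $$ (h,l)) * y l = cnj (\<Sum>h<n. M $$ (l,h) * x h) * y l" by simp
  qed simp
  also have "\<dots> = ip n (mv n M x) y" unfolding ip_def mv_def by simp
  finally show ?thesis .
qed

lemma gs_main: "j < n \<Longrightarrow> (\<exists>b. b j = 1 \<and> (\<forall>l>j. b l = 0) \<and> (\<forall>h. q j h = mv n P b h)) \<and>
   ip n (q j) (q j) \<noteq> 0 \<and> (\<forall>i<j. ip n (q i) (q j) = 0) \<and> (\<forall>h<n. mv n M (q j) h = T $$ (j,j) * q j h)"
proof (induction j rule: less_induct)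
  case (less j)
  have IH: "\<And>i. i < j \<Longrightarrow> (\<exists>b. b i = 1 \<and> (\<forall>l>i. b l = 0) \<and> (\<forall>h. q i h = mv n P b h)) \<and>
   ip n (q i) (q i) \<noteq> 0 \<and> (\<forall>i'<i. ip n (q i') (q i) = 0) \<and> (\<forall>h<n. mv n M (q i) h = T $$ (i,i) * q i h)"
    using less by auto
  have jn: "j < n" by fact
  define \<alpha> where "\<alpha> l = ip n (q l) (pc j) / ip n (q l) (q l)" for l
  have qj: "q j = (\<lambda>h. pc j h - (\<Sum>l<j. \<alpha> l * q l h))"
    using q_eq[of j] unfolding \<alpha>_def by (simp add: pc_def)
  obtain bb where bb: "\<And>i. i < j \<Longrightarrow> bb i i = 1 \<and> (\<forall>l>i. bb i l = 0) \<and> (\<forall>h. q i h = mv n P (bb i) h)"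
  proof -
    have "\<forall>i\<in>{..<j}. \<exists>b. b i = 1 \<and> (\<forall>l>i. b l = 0) \<and> (\<forall>h. q i h = mv n P b h)" using IH by blast
    from bchoice[OF this] obtain bb where "\<forall>i\<in>{..<j}. bb i i = 1 \<and> (\<forall>l>i. bb i l = 0) \<and> (\<forall>h. q i h = mv n P (bb i) h)" ..
    thus ?thesis using that by blast
  qed
  define b where "b l = (if l = j then 1 else 0) - (\<Sum>i<j. \<alpha> i * bb i l)" for l
  have bj: "b j = 1" unfolding b_def using bb by simp
  have bl: "\<forall>l>j. b l = 0" unfolding b_def using bb by simp
  have qPb: "\<forall>h. q j h = mv n P b h"
  proof
    fix h
    have "mv n P b h = (\<Sum>l<n. P $$ (h,l) * (if l = j then 1 else 0)) - (\<Sum>l<n. P $$ (h,l) * (\<Sum>i<j. \<alpha> i * bb i l))"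
      unfolding mv_def b_def by (simp add: right_diff_distrib sum_subtractf)
    also have "(\<Sum>l<n. P $$ (h,l) * (\<Sum>i<j. \<alpha> i * bb i l)) = (\<Sum>i<j. \<alpha> i * (\<Sum>l<n. P $$ (h,l) * bb i l))"
      unfolding sum_distrib_left by (subst sum.swap) (simp add: mult.left_commute)
    also have "(\<Sum>l<n. P $$ (h,l) * (if l = j then 1 else 0)) = P $$ (h,j)"
      using jn by (simp add: if_distrib[of "\<lambda>x. _ * x"] sum.delta cong: if_cong)
    also have "(\<Sum>i<j. \<alpha> i * (\<Sum>l<n. P $$ (h,l) * bb i l)) = (\<Sum>i<j. \<alpha> i * q i h)"
      by (rule sum.cong) (auto simp: bb mv_def)
    finally show "q j h = mv n P b h" unfolding qj pc_def by simp
  qed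
  have nz: "ip n (q j) (q j) \<noteq> 0"
  proof
    assume z: "ip n (q j) (q j) = 0"
    have "mv n P b h = 0" if "h < n" for h using ip_self_zero[OF z that] qPb by simp
    hence "b j = 0" using P_inj jn by blast
    thus False using bj by simp
  qed
  have orth: "\<forall>i<j. ip n (q i) (q j) = 0"
  proof (intro allI impI)
    fix i assume ij: "i < j"
    have z: "ip n (q i) (q l) = 0" if "l < j" "l \<noteq> i" for l
    proof (cases "i < l")
      case True then show ?thesis using IH[OF that(1)] by blast
    next
      case False
      hence "l < i" using that by simp
      hence "ip n (q l) (q i) = 0" using IH[OF ij] by blast
      thus ?thesis by (subst ip_cnj) simp
    qed
    have "ip n (q i) (q j) = ip n (q i) (pc j) - (\<Sum>l<j. \<alpha> l * ip n (q i) (q l))"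
      unfolding qj by (simp add: ip_diff2 ip_sum2 ip_smult2)
    also have "(\<Sum>l<j. \<alpha> l * ip n (q i) (q l)) = (\<Sum>l<j. if l = i then \<alpha> i * ip n (q i) (q i) else 0)"
      by (rule sum.cong) (auto simp: z)
    also have "\<dots> = \<alpha> i * ip n (q i) (q i)" using ij by (simp add: sum.delta')
    also have "\<dots> = ip n (q i) (pc j)" unfolding \<alpha>_def using IH[OF ij] by simp
    finally show "ip n (q i) (q j) = 0" by simp
  qed
  have Mq: "mv n M (q j) h = mv n P (\<lambda>l. \<Sum>i<n. T $$ (l,i) * b i) h" if hn: "h < n" for h
  proof -
    have "mv n M (q j) h = (\<Sum>l<n. M $$ (h,l) * mv n P b l)" unfolding mv_def[of n M] using qPb by simp
    also have "\<dots> = (\<Sum>l<n. M $$ (h,l) * (\<Sum>i<n. P $$ (l,i) * b i))" unfolding mv_def ..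
    also have "\<dots> = (\<Sum>i<n. (\<Sum>l<n. M $$ (h,l) * P $$ (l,i)) * b i)" by (rule sum_swap_mult)
    also have "\<dots> = (\<Sum>i<n. (\<Sum>l<n. P $$ (h,l) * T $$ (l,i)) * b i)"
      by (rule sum.cong) (auto simp: MPT hn)
    also have "\<dots> = (\<Sum>l<n. P $$ (h,l) * (\<Sum>i<n. T $$ (l,i) * b i))" by (rule sum_swap_mult[symmetric])
    also have "\<dots> = mv n P (\<lambda>l. \<Sum>i<n. T $$ (l,i) * b i) h" unfolding mv_def ..
    finally show ?thesis .
  qed
  define c where "c l = (\<Sum>i<n. T $$ (l,i) * b i) - T $$ (j,j) * b l" for l
  have c0: "c l = 0" if "j \<le> l" "l < n" for l
  proof -
    have "(\<Sum>i<n. T $$ (l,i) * b i) = (\<Sum>i<n. if i = j \<and> l = j then T $$ (j,j) else 0)"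
    proof (rule sum.cong)
      fix i assume "i \<in> {..<n}"
      show "T $$ (l,i) * b i = (if i = j \<and> l = j then T $$ (j,j) else 0)"
      proof (cases "i < l")
        case True then show ?thesis using upper[OF that(2) True] that by auto
      next
        case False
        show ?thesis
        proof (cases "i > j")
          case True then show ?thesis using bl by auto
        next
          case False
          hence "i = j" "l = j" using \<open>\<not> i < l\<close> that by auto
          then show ?thesis using bj by simp
        qed
      qed
    qed simp
    also have "\<dots> = (if l = j then T $$ (j,j) else 0)" using jn by (simp add: sum.delta')
    finally show ?thesis unfolding c_def using bj bl that by auto
  qed
  define r where "r h = mv n M (q j) h - T $$ (j,j) * q j h" for h
  have r_eq: "r h = (\<Sum>l<j. c l * pc l h)" if hn: "h < n" for h
  proof -
    have "r h = mv n P (\<lambda>l. \<Sum>i<n. T $$ (l,i) * b i) h - T $$ (j,j) * mv n P b h"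
      unfolding r_def using Mq[OF hn] qPb by simp
    also have "\<dots> = (\<Sum>l<n. P $$ (h,l) * c l)"
      unfolding mv_def c_def by (simp add: right_diff_distrib sum_subtractf sum_distrib_left mult.left_commute)
    also have "\<dots> = (\<Sum>l<j. P $$ (h,l) * c l)"
      by (rule sum.mono_neutral_right) (use jn c0 in auto)
    finally show ?thesis unfolding pc_def by (simp add: mult.commute)
  qed
  have rq: "ip n (q i) r = 0" if ij: "i < j" for i
  proof -
    have "ip n (q i) r = ip n (q i) (mv n M (q j)) - T $$ (j,j) * ip n (q i) (q j)"
      unfolding r_def by (simp add: ip_diff2 ip_smult2)
    also have "ip n (q i) (mv n M (q j)) = ip n (mv n M (q i)) (q j)" by (rule herm_ip)
    also have "\<dots> = ip n (\<lambda>h. T $$ (i,i) * q i h) (q j)"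
      by (rule ip_cong) (use IH[OF ij] in auto)
    also have "\<dots> = 0" using orth ij by (simp add: ip_smult1)
    finally show ?thesis using orth ij by simp
  qed
  have rp: "ip n (pc l) r = 0" if lj: "l < j" for l
  proof -
    have pl: "pc l = (\<lambda>h. q l h + (\<Sum>i<l. (ip n (q i) (pc l) / ip n (q i) (q i)) * q i h))"
      by (subst q_eq) (simp add: pc_def)
    have "ip n (pc l) r = ip n (\<lambda>h. q l h + (\<Sum>i<l. (ip n (q i) (pc l) / ip n (q i) (q i)) * q i h)) r"
      using pl by (rule arg_cong[where f="\<lambda>x. ip n x r"])
    also have "\<dots> = ip n (q l) r + (\<Sum>i<l. cnj (ip n (q i) (pc l) / ip n (q i) (q i)) * ip n (q i) r)"
      by (simp only: ip_add1 ip_sum1 ip_smult1)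
    also have "\<dots> = 0" using rq lj by simp
    finally show ?thesis .
  qed
  have "ip n r r = ip n r (\<lambda>h. \<Sum>l<j. c l * pc l h)" by (rule ip_cong) (auto simp: r_eq)
  also have "\<dots> = (\<Sum>l<j. c l * ip n r (pc l))" by (simp add: ip_sum2 ip_smult2)
  also have "\<dots> = 0" using rp by (subst ip_cnj) simp
  finally have "ip n r r = 0" .
  hence eig: "\<forall>h<n. mv n M (q j) h = T $$ (j,j) * q j h" using ip_self_zero unfolding r_def by fastforce
  show ?case using bj bl qPb nz orth eig by blast
qed

end



lemma sum_sq_le: "(\<Sum>j<n. (a j::real))^2 \<le> real n * (\<Sum>j<n. (a j)^2)"
proof -
  have "(\<Sum>j<n. a j)^2 = (\<Sum>i<n. \<Sum>j<n. a i * a j)" by (simp add: power2_eq_square sum_product)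
  also have "\<dots> \<le> (\<Sum>i<n. \<Sum>j<n. ((a i)^2 + (a j)^2) / 2)"
  proof (intro sum_mono)
    fix i j
    have "0 \<le> (a i - a j)^2" by simp
    then show "a i * a j \<le> ((a i)^2 + (a j)^2) / 2" by (simp add: power2_eq_square algebra_simps)
  qed
  also have "\<dots> = real n * (\<Sum>j<n. (a j)^2)"
    apply (simp add: add_divide_distrib sum.distrib sum_divide_distrib[symmetric])
    by (simp add: sum_distrib_left)
  finally show ?thesis .
qed



lemma proots_lin: "proots (\<Prod>a\<leftarrow>as. [:- a, 1:]) = mset (as :: complex list)"
proof (induct as)
  case Nil then show ?case by simp
next
  case (Cons a as)
  have nz: "(\<Prod>a\<leftarrow>as. [:- a, 1:]) \<noteq> (0 :: complex poly)"
  proof -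
    have "\<And>a::complex. [:- a, 1:] \<noteq> 0" by simp
    then show ?thesis by (auto simp: prod_list_zero_iff)
  qed
  have e: "(\<Prod>a\<leftarrow>a # as. [:- a, 1:]) = [:- a, 1:] * (\<Prod>a\<leftarrow>as. [:- a, 1:])" by simp
  have "proots ([:- a, 1:] * (\<Prod>a\<leftarrow>as. [:- a, 1:])) = proots [:- a, 1:] + proots (\<Prod>a\<leftarrow>as. [:- a, 1:])"
    by (rule proots_mult) (simp, rule nz)
  hence "proots (\<Prod>a\<leftarrow>a # as. [:- a, 1:]) = proots [:- a, 1:] + proots (\<Prod>a\<leftarrow>as. [:- a, 1:])"
    by (subst e)
  also have "proots [:- a, 1:] = {#a#}" using proots_linear_factor[of "-a"] by simp
  finally show ?case using Cons by simp
qed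




lemma adj_index: assumes A: "A \<in> carrier_mat n n" and i: "i < n" and j: "j < n"
  shows "mat_adjoint A $$ (i,j) = cnj (A $$ (j,i))"
proof -
  have "mat_adjoint A $$ (i,j) = (map conjugate (cols A) ! i) $ j"
    unfolding mat_adjoint_def using A i j by (intro mat_of_rows_index) auto
  also have "\<dots> = conjugate (col A i) $ j" using A i by simp
  also have "\<dots> = cnj (A $$ (j,i))" using A i j by simp
  finally show ?thesis .
qed

lemma adj_carrier: fixes A :: "complex mat" assumes A: "A \<in> carrier_mat n n" shows "mat_adjoint A \<in> carrier_mat n n"
proof -
  have "dim_row (mat_adjoint A) = length (map conjugate (cols A))" unfolding mat_adjoint_def by (rule mat_of_rows_carrier(2))
  also have "\<dots> = n" using A by simp
  finally have 1: "dim_row (mat_adjoint A) = n" .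
  have "dim_col (mat_adjoint A) = dim_row A" unfolding mat_adjoint_def by (rule mat_of_rows_carrier(3))
  hence 2: "dim_col (mat_adjoint A) = n" using A by simp
  show ?thesis by (rule carrier_matI[OF 1 2])
qed

lemma mult_index: assumes "A \<in> carrier_mat n m" "B \<in> carrier_mat m p" "i < n" "j < p"
  shows "(A * B) $$ (i,j) = (\<Sum>l<m. A $$ (i,l) * B $$ (l,j))"
proof -
  have "(A * B) $$ (i,j) = row A i \<bullet> col B j" using assms by (intro index_mult_mat(1)) auto
  also have "\<dots> = (\<Sum>l\<in>{0..<m}. row A i $ l * col B j $ l)" using assms by (simp add: scalar_prod_def)
  also have "\<dots> = (\<Sum>l<m. A $$ (i,l) * B $$ (l,j))" unfolding atLeast0LessThan
    by (rule sum.cong) (use assms in auto)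
  finally show ?thesis .
qed

lemma LA:
  fixes A :: "complex mat" and U W :: "nat \<Rightarrow> nat \<Rightarrow> complex" and \<epsilon> :: real
  assumes A: "A \<in> carrier_mat n n" and kn: "k < n" and eps: "0 \<le> \<epsilon>"
    and approx: "\<And>h j. h < n \<Longrightarrow> j < n \<Longrightarrow> cmod (A $$ (h,j) - (\<Sum>m<k. U h m * W m j)) \<le> \<epsilon>"
  shows "sigma A (k+1) \<le> real n * \<epsilon>"
proof (rule ccontr)
  assume "\<not> ?thesis"
  hence big: "sigma A (k+1) > real n * \<epsilon>" by simp
  define E where "E = real n * \<epsilon>"
  have E0: "0 \<le> E" using eps by (simp add: E_def)
  define M where "M = mat_adjoint A * A"
  have Mc: "M \<in> carrier_mat n n" unfolding M_def by (rule mult_carrier_mat[OF adj_carrier[OF A] A])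
  have Mij: "M $$ (i,l) = (\<Sum>h<n. cnj (A $$ (h,i)) * A $$ (h,l))" if "i < n" "l < n" for i l
    unfolding M_def by (subst mult_index[OF adj_carrier[OF A] A that]) (rule sum.cong, simp_all add: adj_index[OF A] that)
  obtain as where cp: "char_poly M = (\<Prod>a\<leftarrow>as. [:- a, 1:])" and las: "length as = n"
    using char_poly_factorized[OF Mc] by blast
  have pr: "proots (char_poly M) = mset as" using cp proots_lin by simp
  define G where "G z = (E < sqrt (Re z))" for z :: complex
  define X where "X = image_mset (\<lambda>z. sqrt (Re z)) (proots (char_poly M))"
  define sl where "sl = sorted_list_of_multiset X"
  have sv: "singular_values A = rev sl" unfolding singular_values_def sl_def X_def M_def ..
  have msl: "mset sl = X" unfolding sl_def by simp
  have lsl: "length sl = n"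
  proof -
    have "length sl = size (mset sl)" by simp
    also have "\<dots> = size X" using msl by simp
    also have "\<dots> = n" unfolding X_def pr using las by simp
    finally show ?thesis .
  qed
  have ssl: "sorted sl" unfolding sl_def by simp
  have Lk: "rev sl ! k > E" using big sv unfolding sigma_def E_def by simp
  have allbig: "\<forall>y\<in>set (take (k+1) (rev sl)). E < y"
  proof
    fix y assume "y \<in> set (take (k+1) (rev sl))"
    then obtain i where i: "i < length (take (k+1) (rev sl))" "y = take (k+1) (rev sl) ! i"
      by (auto simp: in_set_conv_nth)
    hence ik: "i \<le> k" "i < n" using lsl kn by auto
    have "y = rev sl ! i" using i by simp
    also have "\<dots> = sl ! (n - Suc i)" using ik lsl by (simp add: rev_nth)
    finally have yi: "y = sl ! (n - Suc i)" .
    have "sl ! (n - Suc k) \<le> sl ! (n - Suc i)" by (rule sorted_nth_mono[OF ssl]) (use ik kn lsl in auto)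
    moreover have "rev sl ! k = sl ! (n - Suc k)" using kn lsl by (simp add: rev_nth)
    ultimately show "E < y" using Lk yi by simp
  qed
  have "k+1 \<le> length (filter (\<lambda>y. E < y) (rev sl))"
  proof -
    have "filter (\<lambda>y. E < y) (take (k+1) (rev sl)) = take (k+1) (rev sl)" using allbig by simp
    hence "length (filter (\<lambda>y. E < y) (take (k+1) (rev sl))) = k+1" using kn lsl by simp
    moreover have "length (filter (\<lambda>y. E < y) (rev sl)) = length (filter (\<lambda>y. E < y) (take (k+1) (rev sl)))
       + length (filter (\<lambda>y. E < y) (drop (k+1) (rev sl)))"
    proof -
      have "filter (\<lambda>y. E < y) (rev sl) = filter (\<lambda>y. E < y) (take (k+1) (rev sl)) @ filter (\<lambda>y. E < y) (drop (k+1) (rev sl))"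
        by (simp only: filter_append[symmetric] append_take_drop_id)
      then show ?thesis by simp
    qed
    ultimately show ?thesis by simp
  qed
  moreover have "length (filter (\<lambda>y. E < y) (rev sl)) = size (filter_mset (\<lambda>y. E < y) X)"
  proof -
    have "length (filter (\<lambda>y. E < y) (rev sl)) = size (mset (filter (\<lambda>y. E < y) (rev sl)))" by (rule size_mset[symmetric])
    also have "mset (filter (\<lambda>y. E < y) (rev sl)) = filter_mset (\<lambda>y. E < y) (mset (rev sl))" by (rule mset_filter)
    also have "mset (rev sl) = X" using msl by simp
    finally show ?thesis .
  qed
  ultimately have "k+1 \<le> size (filter_mset (\<lambda>y. E < y) X)" by simp
  hence lG: "k+1 \<le> length (filter G as)"
    unfolding X_def pr filter_mset_image_mset G_def by (simp flip: mset_filter)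
  define es where "es = filter G as @ filter (\<lambda>z. \<not> G z) as"
  have mes: "mset es = mset as" unfolding es_def by (simp add: multiset_partition[symmetric])
  have cpes: "char_poly M = (\<Prod>a\<leftarrow>es. [:- a, 1:])"
  proof -
    have pm: "prod_mset (image_mset (\<lambda>a. [:- a, 1:]) (mset xs)) = (\<Prod>a\<leftarrow>xs. [:- a, 1:])" for xs :: "complex list"
      by (induct xs) auto
    have "(\<Prod>a\<leftarrow>es. [:- a, 1:]) = prod_mset (image_mset (\<lambda>a. [:- a, 1:]) (mset es))"
      by (rule pm[symmetric])
    also have "\<dots> = (\<Prod>a\<leftarrow>as. [:- a, 1:])" unfolding mes by (rule pm)
    finally show ?thesis using cp by simp
  qed
  obtain T P Q where sd: "schur_decomposition M es = (T,P,Q)" by (cases "schur_decomposition M es") auto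
  from schur_decomposition[OF Mc cpes sd] have sim: "similar_mat_wit M T P Q" and ut: "upper_triangular T"
    and dT: "diag_mat T = es" by auto
  have dimM: "dim_row M = n" using Mc by simp
  from sim have Tc: "T \<in> carrier_mat n n" and Pc: "P \<in> carrier_mat n n" and Qc: "Q \<in> carrier_mat n n"
    and QP: "Q * P = 1\<^sub>m n" and MPTQ: "M = P * T * Q"
    unfolding similar_mat_wit_def Let_def dimM by auto
  have MP: "M * P = P * T"
  proof -
    have PT: "P * T \<in> carrier_mat n n" using Pc Tc by simp
    have "M * P = P * T * Q * P" using MPTQ by simp
    also have "\<dots> = (P * T) * (Q * P)" using assoc_mult_mat[OF PT Qc Pc] .
    also have "\<dots> = P * T" using QP right_mult_one_mat[OF PT] by simp
    finally show ?thesis .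
  qed
  interpret gs: gs_setup n M P Q T
  proof
    fix i l assume il: "i < n" "l < n"
    show "M $$ (i,l) = cnj (M $$ (l,i))" using il
      by (simp add: Mij mult.commute)
  next
    fix i j assume ij: "i < n" "j < n"
    have "(M * P) $$ (i,j) = (P * T) $$ (i,j)" using MP by simp
    then show "(\<Sum>l<n. M $$ (i,l) * P $$ (l,j)) = (\<Sum>l<n. P $$ (i,l) * T $$ (l,j))"
      using mult_index[OF Mc Pc ij] mult_index[OF Pc Tc ij] by simp
  next
    fix i j assume ij: "i < n" "j < n"
    have "(Q * P) $$ (i,j) = 1\<^sub>m n $$ (i,j)" using QP by simp
    then show "(\<Sum>l<n. Q $$ (i,l) * P $$ (l,j)) = (if i = j then 1 else 0)"
      using mult_index[OF Qc Pc ij] ij by simp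
  next
    fix i j assume "i < n" "j < i"
    then show "T $$ (i,j) = 0" using ut Tc unfolding upper_triangular_def by auto
  qed
  have Tdiag: "T $$ (j,j) = es ! j" if "j < n" for j
  proof -
    have "es ! j = diag_mat T ! j" using dT by simp
    also have "\<dots> = T $$ (j,j)" using Tc that unfolding diag_mat_def by simp
    finally show ?thesis by simp
  qed
  have Tbig: "E^2 < Re (T $$ (t,t))" if "t < k+1" for t
  proof -
    have tl: "t < length (filter G as)" using that lG by simp
    have "T $$ (t,t) = es ! t" using Tdiag that kn by simp
    also have "\<dots> = filter G as ! t" unfolding es_def using tl by (simp add: nth_append)
    finally have "G (T $$ (t,t))" using nth_mem[OF tl] by simp
    hence s: "E < sqrt (Re (T $$ (t,t)))" unfolding G_def .
    have "E^2 < (sqrt (Re (T $$ (t,t))))^2" by (rule power_strict_mono) (use s E0 in auto)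
    moreover have "0 < Re (T $$ (t,t))" using s E0 by (metis le_less_trans real_sqrt_gt_0_iff)
    ultimately show ?thesis by simp
  qed
  have qnz: "ip n (gs.q t) (gs.q t) \<noteq> 0" if "t < k+1" for t using gs.gs_main[of t] that kn by auto
  have qorth: "ip n (gs.q t) (gs.q t') = 0" if "t < k+1" "t' < k+1" "t \<noteq> t'" for t t'
  proof (cases "t < t'")
    case True then show ?thesis using gs.gs_main[of t'] that kn by auto
  next
    case False
    hence "t' < t" using that by simp
    hence "ip n (gs.q t') (gs.q t) = 0" using gs.gs_main[of t] that kn by auto
    thus ?thesis by (subst ip_cnj) simp
  qed
  have qeig: "mv n M (gs.q t) h = T $$ (t,t) * gs.q t h" if "t < k+1" "h < n" for t h
    using gs.gs_main[of t] that kn by auto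
  define cv where "cv m = vec (k+1) (\<lambda>t. \<Sum>h<n. W m h * gs.q t h)" for m
  define Gm where "Gm = mat\<^sub>r (k+1) (k+1) (\<lambda>m. if m = k then 0\<^sub>v (k+1) else cv m)"
  have "det Gm = 0" unfolding Gm_def by (rule det_row_0) (auto simp: cv_def)
  moreover have Gmc: "Gm \<in> carrier_mat (k+1) (k+1)" unfolding Gm_def by simp
  ultimately obtain v where v: "v \<in> carrier_vec (k+1)" "v \<noteq> 0\<^sub>v (k+1)" "Gm *\<^sub>v v = 0\<^sub>v (k+1)"
    using det_0_iff_vec_prod_zero[OF Gmc] by blast
  have Wx0: "(\<Sum>t<k+1. (\<Sum>h<n. W m h * gs.q t h) * v $ t) = 0" if "m < k" for m
  proof -
    have "(Gm *\<^sub>v v) $ m = 0" using v(3) that by simp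
    moreover have "(Gm *\<^sub>v v) $ m = (\<Sum>t<k+1. (\<Sum>h<n. W m h * gs.q t h) * v $ t)"
    proof -
      have "(Gm *\<^sub>v v) $ m = row Gm m \<bullet> v" using that Gmc by (simp add: index_mult_mat_vec)
      also have "row Gm m = cv m" unfolding Gm_def using that by (simp add: cv_def)
      also have "cv m \<bullet> v = (\<Sum>t<k+1. (\<Sum>h<n. W m h * gs.q t h) * v $ t)"
        using v(1) by (simp add: scalar_prod_def cv_def atLeast0LessThan)
      finally show ?thesis .
    qed
    ultimately show ?thesis by simp
  qed
  obtain t0 where t0: "t0 < k+1" "v $ t0 \<noteq> 0"
  proof (rule ccontr)
    assume "\<not> thesis"
    hence "\<And>t. t < k+1 \<Longrightarrow> v $ t = 0" using that by blast
    hence "v = 0\<^sub>v (k+1)" using v(1) by (intro eq_vecI) auto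
    thus False using v(2) by simp
  qed
  define x where "x h = (\<Sum>t<k+1. v $ t * gs.q t h)" for h
  define N where "N t = Re (ip n (gs.q t) (gs.q t))" for t
  have ipN: "ip n (gs.q t) (gs.q t) = of_real (N t)" for t unfolding N_def by (simp add: ip_self)
  have Npos: "0 < N t" if "t < k+1" for t
  proof -
    have "0 \<le> N t" unfolding N_def ip_self by (simp add: sum_nonneg)
    moreover have "N t \<noteq> 0" using qnz[OF that] ipN[of t] by auto
    ultimately show ?thesis by simp
  qed
  have ipqx: "ip n (gs.q t) x = v $ t * of_real (N t)" if "t < k+1" for t
  proof -
    have "ip n (gs.q t) x = (\<Sum>t'<k+1. v $ t' * ip n (gs.q t) (gs.q t'))"
      unfolding x_def[abs_def] by (simp only: ip_sum2 ip_smult2)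
    also have "\<dots> = (\<Sum>t'<k+1. if t' = t then v $ t * ip n (gs.q t) (gs.q t) else 0)"
    proof (rule sum.cong)
      fix t' assume "t' \<in> {..<k+1}"
      then show "v $ t' * ip n (gs.q t) (gs.q t') = (if t' = t then v $ t * ip n (gs.q t) (gs.q t) else 0)"
        using qorth[of t t'] that by auto
    qed simp
    also have "\<dots> = v $ t * of_real (N t)" using that by (simp add: ipN)
    finally show ?thesis .
  qed
  have ipxq: "ip n x (gs.q t) = cnj (v $ t) * of_real (N t)" if "t < k+1" for t
    using ipqx[OF that] by (subst ip_cnj) simp
  have ipxx: "ip n x x = (\<Sum>t<k+1. of_real ((cmod (v $ t))^2 * N t))"
  proof -
    have xe: "x = (\<lambda>h. \<Sum>t<k+1. v $ t * gs.q t h)" unfolding x_def[abs_def] ..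
    have "ip n x x = ip n (\<lambda>h. \<Sum>t<k+1. v $ t * gs.q t h) x"
      by (rule arg_cong[where f="\<lambda>y. ip n y x"], rule xe)
    also have "\<dots> = (\<Sum>t<k+1. cnj (v $ t) * ip n (gs.q t) x)"
      by (simp only: ip_sum1 ip_smult1)
    also have "\<dots> = (\<Sum>t<k+1. of_real ((cmod (v $ t))^2 * N t))"
      by (rule sum.cong) (auto simp: ipqx mult.assoc[symmetric] cnj_mult_self)
    finally show ?thesis .
  qed
  have Mx: "mv n M x h = (\<Sum>t<k+1. (v $ t * T $$ (t,t)) * gs.q t h)" if "h < n" for h
  proof -
    have "mv n M x h = (\<Sum>l<n. M $$ (h,l) * (\<Sum>t<k+1. gs.q t l * v $ t))"
      unfolding mv_def x_def by (simp add: mult.commute)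
    also have "\<dots> = (\<Sum>t<k+1. (\<Sum>l<n. M $$ (h,l) * gs.q t l) * v $ t)" by (rule sum_swap_mult)
    also have "\<dots> = (\<Sum>t<k+1. (v $ t * T $$ (t,t)) * gs.q t h)"
    proof (rule sum.cong)
      fix t assume "t \<in> {..<k+1}"
      then show "(\<Sum>l<n. M $$ (h,l) * gs.q t l) * v $ t = (v $ t * T $$ (t,t)) * gs.q t h"
        using qeig[of t h] that unfolding mv_def by simp
    qed simp
    finally show ?thesis .
  qed
  have ipxMx: "ip n x (mv n M x) = (\<Sum>t<k+1. of_real ((cmod (v $ t))^2 * N t) * T $$ (t,t))"
  proof -
    have "ip n x (mv n M x) = ip n x (\<lambda>h. \<Sum>t<k+1. (v $ t * T $$ (t,t)) * gs.q t h)"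
      by (rule ip_cong) (auto simp: Mx)
    also have "\<dots> = (\<Sum>t<k+1. (v $ t * T $$ (t,t)) * ip n x (gs.q t))" by (simp only: ip_sum2 ip_smult2)
    also have "\<dots> = (\<Sum>t<k+1. of_real ((cmod (v $ t))^2 * N t) * T $$ (t,t))"
    proof (rule sum.cong)
      fix t assume "t \<in> {..<k+1}"
      hence "ip n x (gs.q t) = cnj (v $ t) * of_real (N t)" using ipxq by simp
      then show "(v $ t * T $$ (t,t)) * ip n x (gs.q t) = of_real ((cmod (v $ t))^2 * N t) * T $$ (t,t)"
        using cnj_mult_self[of "v $ t"] by (simp add: algebra_simps)
    qed simp
    finally show ?thesis .
  qed
  have gt: "E^2 * Re (ip n x x) < Re (ip n x (mv n M x))"
  proof -
    have "Re (ip n x (mv n M x)) - E^2 * Re (ip n x x) = (\<Sum>t<k+1. (cmod (v $ t))^2 * N t * (Re (T $$ (t,t)) - E^2))"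
      unfolding ipxMx ipxx by (simp add: Re_sum sum_distrib_left sum_subtractf algebra_simps)
    also have "\<dots> > 0"
    proof (rule sum_pos2[of _ t0])
      show "0 < (cmod (v $ t0))^2 * N t0 * (Re (T $$ (t0,t0)) - E^2)"
        using t0 Npos[of t0] Tbig[of t0] by simp
    next
      fix t assume "t \<in> {..<k+1}"
      then show "0 \<le> (cmod (v $ t))^2 * N t * (Re (T $$ (t,t)) - E^2)"
        using Npos[of t] Tbig[of t] by simp
    qed (use t0 in auto)
    finally show ?thesis by simp
  qed
  define R where "R h j = A $$ (h,j) - (\<Sum>m<k. U h m * W m j)" for h j
  have Wx: "(\<Sum>j<n. W m j * x j) = 0" if "m < k" for m
  proof -
    have "(\<Sum>j<n. W m j * x j) = (\<Sum>j<n. W m j * (\<Sum>t<k+1. gs.q t j * v $ t))"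
      unfolding x_def by (simp add: mult.commute)
    also have "\<dots> = (\<Sum>t<k+1. (\<Sum>j<n. W m j * gs.q t j) * v $ t)" by (rule sum_swap_mult)
    also have "\<dots> = 0" by (rule Wx0[OF that])
    finally show ?thesis .
  qed
  have AxR: "mv n A x h = (\<Sum>j<n. R h j * x j)" if "h < n" for h
  proof -
    have "mv n A x h = (\<Sum>j<n. R h j * x j) + (\<Sum>j<n. (\<Sum>m<k. U h m * W m j) * x j)"
    proof -
      have "(\<Sum>j<n. R h j * x j) + (\<Sum>j<n. (\<Sum>m<k. U h m * W m j) * x j) = (\<Sum>j<n. A $$ (h,j) * x j)"
        unfolding sum.distrib[symmetric] R_def by (rule sum.cong) (simp_all add: algebra_simps)
      then show ?thesis unfolding mv_def by simp
    qed
    also have "(\<Sum>j<n. (\<Sum>m<k. U h m * W m j) * x j) = (\<Sum>m<k. U h m * (\<Sum>j<n. W m j * x j))"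
      by (rule sum_swap_mult[symmetric])
    also have "\<dots> = 0" by (simp add: Wx)
    finally show ?thesis by simp
  qed
  define S where "S = (\<Sum>j<n. cmod (x j))"
  have Axb: "cmod (mv n A x h) \<le> \<epsilon> * S" if "h < n" for h
  proof -
    have "cmod (mv n A x h) \<le> (\<Sum>j<n. cmod (R h j * x j))" unfolding AxR[OF that] by (rule norm_sum)
    also have "\<dots> \<le> (\<Sum>j<n. \<epsilon> * cmod (x j))"
    proof (rule sum_mono)
      fix j assume "j \<in> {..<n}"
      then have "cmod (R h j) \<le> \<epsilon>" unfolding R_def using approx that by simp
      then show "cmod (R h j * x j) \<le> \<epsilon> * cmod (x j)" by (simp add: norm_mult mult_right_mono)
    qed
    also have "\<dots> = \<epsilon> * S" unfolding S_def by (simp add: sum_distrib_left)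
    finally show ?thesis .
  qed
  have ipA: "ip n x (mv n M x) = ip n (mv n A x) (mv n A x)"
  proof -
    have "ip n x (mv n M x) = (\<Sum>i<n. cnj (x i) * (\<Sum>l<n. (\<Sum>h<n. cnj (A $$ (h,i)) * A $$ (h,l)) * x l))"
      unfolding ip_def mv_def
    proof (rule sum.cong)
      fix i assume i: "i \<in> {..<n}"
      have "(\<Sum>l<n. M $$ (i,l) * x l) = (\<Sum>l<n. (\<Sum>h<n. cnj (A $$ (h,i)) * A $$ (h,l)) * x l)"
      proof (rule sum.cong)
        fix l assume "l \<in> {..<n}"
        then show "M $$ (i,l) * x l = (\<Sum>h<n. cnj (A $$ (h,i)) * A $$ (h,l)) * x l" using Mij[of i l] i by simp
      qed simp
      then show "cnj (x i) * (\<Sum>l<n. M $$ (i,l) * x l) = cnj (x i) * (\<Sum>l<n. (\<Sum>h<n. cnj (A $$ (h,i)) * A $$ (h,l)) * x l)"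
        by simp
    qed simp
    also have "\<dots> = (\<Sum>i<n. cnj (x i) * (\<Sum>h<n. cnj (A $$ (h,i)) * (\<Sum>l<n. A $$ (h,l) * x l)))"
    proof (rule sum.cong)
      fix i
      have "(\<Sum>h<n. cnj (A $$ (h,i)) * (\<Sum>l<n. A $$ (h,l) * x l)) = (\<Sum>l<n. (\<Sum>h<n. cnj (A $$ (h,i)) * A $$ (h,l)) * x l)"
        by (rule sum_swap_mult)
      then show "cnj (x i) * (\<Sum>l<n. (\<Sum>h<n. cnj (A $$ (h,i)) * A $$ (h,l)) * x l) = cnj (x i) * (\<Sum>h<n. cnj (A $$ (h,i)) * (\<Sum>l<n. A $$ (h,l) * x l))"
        by simp
    qed simp
    also have "\<dots> = (\<Sum>h<n. (\<Sum>i<n. cnj (x i) * cnj (A $$ (h,i))) * (\<Sum>l<n. A $$ (h,l) * x l))"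
      by (rule sum_swap_mult)
    also have "\<dots> = ip n (mv n A x) (mv n A x)"
      unfolding ip_def mv_def
    proof (rule sum.cong)
      fix h
      have "(\<Sum>i<n. cnj (x i) * cnj (A $$ (h,i))) = cnj (\<Sum>l<n. A $$ (h,l) * x l)"
        by (simp add: mult.commute)
      then show "(\<Sum>i<n. cnj (x i) * cnj (A $$ (h,i))) * (\<Sum>l<n. A $$ (h,l) * x l) = cnj (\<Sum>l<n. A $$ (h,l) * x l) * (\<Sum>l<n. A $$ (h,l) * x l)"
        by simp
    qed simp
    finally show ?thesis .
  qed
  have xx: "Re (ip n x x) = (\<Sum>j<n. (cmod (x j))^2)" by (simp add: ip_self)
  have "Re (ip n x (mv n M x)) = (\<Sum>h<n. (cmod (mv n A x h))^2)" unfolding ipA by (simp add: ip_self)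
  also have "\<dots> \<le> (\<Sum>h<n. (\<epsilon> * S)^2)"
    by (rule sum_mono) (auto intro!: power_mono Axb)
  also have "\<dots> = real n * \<epsilon>^2 * S^2" by (simp add: power_mult_distrib)
  also have "\<dots> \<le> real n * \<epsilon>^2 * (real n * Re (ip n x x))"
    unfolding xx S_def by (rule mult_left_mono[OF sum_sq_le]) simp
  also have "\<dots> = E^2 * Re (ip n x x)" unfolding E_def by (simp add: power2_eq_square)
  finally show False using gt by simp
qed


lemma geo_id:
  fixes a b :: complex
  assumes a: "a \<noteq> 0" and ab: "a \<noteq> b"
  shows "inverse (a - b) = (\<Sum>m<k. b^m / a^(m+1)) + (b/a)^k / (a - b)"
proof (induct k)
  case 0 then show ?case by (simp add: divide_inverse)
next
  case (Suc k)
  have "(b/a)^k / (a - b) = b^k / a^(k+1) + (b/a)^(Suc k) / (a - b)"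
    using a ab by (simp add: field_simps power_Suc)
  then show ?case using Suc by simp
qed

lemma norm_xi: "cmod (xi n j) = 1"
  unfolding xi_def by (simp add: norm_exp_eq_Re)

lemma pser_bound:
  fixes p :: "nat \<Rightarrow> real" and r :: real and z :: complex
  assumes nonneg: "\<And>j. p j \<ge> 0" and sr: "summable (\<lambda>j. p j * r ^ j)" and z: "cmod z = r"
  shows "cmod (pser p z - of_real (p 0)) \<le> (\<Sum>j. p j * r ^ j) - p 0"
proof -
  define g where "g j = complex_of_real (p j) * z ^ j" for j
  have ng: "norm (g j) = p j * r ^ j" for j unfolding g_def using nonneg[of j] z by (simp add: norm_mult norm_power)
  have sng: "summable (\<lambda>j. norm (g j))" unfolding ng by (rule sr)
  have sg: "summable g" by (rule summable_norm_cancel[OF sng])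
  have pg: "pser p z = suminf g" unfolding pser_def g_def ..
  have g0: "g 0 = of_real (p 0)" unfolding g_def by simp
  have "pser p z - of_real (p 0) = (\<Sum>j. g (Suc j))"
    unfolding pg g0[symmetric] using suminf_split_head[OF sg] by simp
  also have "norm \<dots> \<le> (\<Sum>j. norm (g (Suc j)))"
  proof (rule summable_norm)
    show "summable (\<lambda>j. norm (g (Suc j)))" using summable_Suc_iff[of "\<lambda>j. norm (g j)"] sng by simp
  qed
  also have "\<dots> = (\<Sum>j. p j * r ^ j) - p 0"
    unfolding ng using suminf_split_head[OF sr] by simp
  finally show ?thesis .
qed

theorem lemma3p4:
  fixes p :: "nat \<Rightarrow> real" and r :: real and n :: nat
  assumes nonneg: "\<And>j. p j \<ge> 0"
    and P1: "summable p" "(\<Sum>j. p j) = 1"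
    and dP1: "summable (\<lambda>j. real j * p j)"
        "(\<Sum>j. real j * p j) > 0" "(\<Sum>j. real j * p j) < 1"
    and r1: "r > 1"
    and Pr_fin: "summable (\<lambda>j. p j * r ^ j)"
    and Pr: "r > (\<Sum>j. p j * r ^ j)"
  shows "let \<theta> = ((\<Sum>j. p j * r ^ j) - p 0) / (r - p 0) in
           0 < \<theta> \<and> \<theta> < 1 \<and>
           (\<forall>k\<in>{1..n-1}. sigma (CPr p r n) (k + 1)
               \<le> \<theta> ^ k * real n / ((1 - \<theta>) * (r - p 0)))"
proof -
  define S where "S = (\<Sum>j. p j * r ^ j)"
  define \<theta> where "\<theta> = (S - p 0) / (r - p 0)"
  have p0le: "p 0 \<le> 1"
  proof -
    have "sum p {..<1} \<le> (\<Sum>j. p j)" by (rule sum_le_suminf[OF P1(1)]) (use nonneg in auto)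
    thus ?thesis using P1(2) by simp
  qed
  have rp0: "0 < r - p 0" using p0le r1 by simp
  obtain j where j: "0 < real j * p j"
  proof (rule ccontr)
    assume "\<not> thesis"
    hence "\<And>j. \<not> 0 < real j * p j" using that by blast
    hence "\<And>j. real j * p j = 0" using nonneg by (metis less_eq_real_def of_nat_0_le_iff zero_le_mult_iff)
    hence "(\<lambda>j. real j * p j) = (\<lambda>_. 0)" by (intro ext)
    hence "(\<Sum>j. real j * p j) = 0" by simp
    thus False using dP1(2) by simp
  qed
  hence j0: "j \<noteq> 0" and pj: "0 < p j" using nonneg[of j] by (auto simp: zero_less_mult_iff)
  have Sp0: "p 0 < S"
  proof -
    have nn: "\<And>i. 0 \<le> p i * r ^ i" using nonneg r1 by simp
    have "p 0 + p j * r ^ j = sum (\<lambda>i. p i * r ^ i) {0, j}" using j0 by simp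
    also have "\<dots> \<le> sum (\<lambda>i. p i * r ^ i) {..<Suc j}" by (rule sum_mono2) (use nn in auto)
    also have "\<dots> \<le> S" unfolding S_def by (rule sum_le_suminf[OF Pr_fin]) (use nn in auto)
    finally show ?thesis using pj r1 by (smt (verit) mult_pos_pos zero_less_power)
  qed
  have th0: "0 < \<theta>" unfolding \<theta>_def using Sp0 rp0 by simp
  have th1: "\<theta> < 1" unfolding \<theta>_def using Pr rp0 unfolding S_def[symmetric] by simp
  have Sth: "S - p 0 = \<theta> * (r - p 0)" unfolding \<theta>_def using rp0 by simp
  have main: "sigma (CPr p r n) (k + 1) \<le> \<theta> ^ k * real n / ((1 - \<theta>) * (r - p 0))" if k: "k \<in> {1..n-1}" for k
  proof -
    have kn: "k < n" using k by auto
    define a where "a h = complex_of_real r * xi n (h + 1) - of_real (p 0)" for h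
    define b where "b j = pser p (complex_of_real r * xi n (j + 1)) - of_real (p 0)" for j
    define \<epsilon> where "\<epsilon> = \<theta> ^ k / ((1 - \<theta>) * (r - p 0))"
    have eps: "0 \<le> \<epsilon>" unfolding \<epsilon>_def using th0 th1 rp0 by simp
    have na: "r - p 0 \<le> cmod (a h)" for h
    proof -
      have "cmod (complex_of_real r * xi n (h + 1)) - cmod (complex_of_real (p 0)) \<le> cmod (a h)"
        unfolding a_def by (rule norm_triangle_ineq2)
      thus ?thesis using r1 nonneg[of 0] by (simp add: norm_mult norm_xi)
    qed
    have nb: "cmod (b j) \<le> \<theta> * (r - p 0)" for j
    proof -
      have "cmod (b j) \<le> S - p 0" unfolding b_def S_def
        by (rule pser_bound[OF nonneg Pr_fin]) (use r1 in \<open>simp add: norm_mult norm_xi\<close>)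
      thus ?thesis using Sth by simp
    qed
    have approx: "cmod (CPr p r n $$ (h,j) - (\<Sum>m<k. (1 / a h ^ (m+1)) * b j ^ m)) \<le> \<epsilon>"
      if hj: "h < n" "j < n" for h j
    proof -
      have ap: "0 < cmod (a h)" using na[of h] rp0 by linarith
      have nba: "cmod (b j) \<le> \<theta> * cmod (a h)" using nb[of j] na[of h] th0 by (smt (verit) mult_left_mono)
      have d: "(1 - \<theta>) * (r - p 0) \<le> cmod (a h - b j)"
      proof -
        have "(1 - \<theta>) * (r - p 0) \<le> (1 - \<theta>) * cmod (a h)" using na[of h] th1 by simp
        also have "\<dots> \<le> cmod (a h) - cmod (b j)" using nba by (simp add: algebra_simps)
        also have "\<dots> \<le> cmod (a h - b j)" by (rule norm_triangle_ineq2)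
        finally show ?thesis .
      qed
      have dpos: "0 < (1 - \<theta>) * (r - p 0)" using th1 rp0 by simp
      have a0: "a h \<noteq> 0" using ap by auto
      have ab: "a h \<noteq> b j" using d dpos by auto
      have e: "CPr p r n $$ (h,j) = inverse (a h - b j)"
        unfolding CPr_def a_def b_def using hj by simp
      have "CPr p r n $$ (h,j) - (\<Sum>m<k. (1 / a h ^ (m+1)) * b j ^ m) = (b j / a h)^k / (a h - b j)"
        unfolding e geo_id[OF a0 ab, of k] by simp
      also have "cmod \<dots> = (cmod (b j) / cmod (a h))^k / cmod (a h - b j)"
        by (simp add: norm_divide norm_power)
      also have "\<dots> \<le> \<theta>^k / ((1 - \<theta>) * (r - p 0))"
      proof (rule frac_le)
        show "0 \<le> \<theta> ^ k" using th0 by simp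
        have "cmod (b j) / cmod (a h) \<le> \<theta>" using nba ap by (simp add: divide_le_eq)
        then show "(cmod (b j) / cmod (a h)) ^ k \<le> \<theta> ^ k" by (rule power_mono) simp
        show "0 < (1 - \<theta>) * (r - p 0)" by (rule dpos)
        show "(1 - \<theta>) * (r - p 0) \<le> cmod (a h - b j)" by (rule d)
      qed
      finally show ?thesis unfolding \<epsilon>_def .
    qed
    have C: "CPr p r n \<in> carrier_mat n n" unfolding CPr_def by simp
    have "sigma (CPr p r n) (k + 1) \<le> real n * \<epsilon>"
      by (rule LA[OF C kn eps approx])
    also have "\<dots> = \<theta> ^ k * real n / ((1 - \<theta>) * (r - p 0))" unfolding \<epsilon>_def by simp
    finally show ?thesis .
  qed
  show ?thesis unfolding Let_def S_def[symmetric] \<theta>_def[symmetric] using th0 th1 main by blast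
qed


end
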